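(* Let $\Sigma$ be an arbitrary group and $A$ a difference ring, and let $X=\operatorname{PSpec}A$ with the topology whose closed sets are the sets $V(E)$, $E\subseteq A$. For $s\in A$ let $X_s=X\setminus V(s)$. Then: (1) for all $s,t\in A$, $X_s\cap X_t=\bigcup_{\sigma,\tau\in\Sigma}X_{\sigma(s)\tau(t)}$; (2) $X_s=\emptyset$ if and only if $s$ is nilpotent; (3) $X$ is quasi-compact; (4) the maps $\mathfrak t\mapsto V(\mathfrak t)$ and $Z\mapsto\bigcap_{\mathfrak q\in Z}\mathfrak q$ are mutually inverse bijections between the set of radical difference ideals of $A$ and the set of closed subsets of $X$.
   Context: Let $\Sigma$ be a group. A difference ring is a commutative ring $A$ with identity together with an action of $\Sigma$ on $A$ by ring automorphisms. A difference ideal is an ideal $\mathfrak a$ with $\sigma(\mathfrak a)\subseteq\mathfrak a$ for all $\sigma\in\Sigma$. A difference ideal $\mathfrak q$ is pseudoprime if there is a multiplicatively closed subset $S\subseteq A$ with $1\in S$ such that $\mathfrak q$ is maximal among difference ideals of $A$ not meeting $S$. $\operatorname{PSpec}A$ denotes the set of pseudoprime ideals of $A$, and for $E\subseteq A$, $V(E)$ is the set of pseudoprime ideals containing $E$; these sets are the closed sets of a topology on $\operatorname{PSpec}A$. *)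

theory Defs
  imports Main "HOL-Algebra.Group"
begin

definition ring_automorphism :: "('a::comm_ring_1 \<Rightarrow> 'a) \<Rightarrow> bool" where
  "ring_automorphism f \<longleftrightarrow> bij f \<and> (\<forall>x y. f (x + y) = f x + f y)
     \<and> (\<forall>x y. f (x * y) = f x * f y) \<and> f 1 = 1"

definition difference_ring :: "('g, 'b) monoid_scheme \<Rightarrow> ('g \<Rightarrow> 'a::comm_ring_1 \<Rightarrow> 'a) \<Rightarrow> bool" where
  "difference_ring G act \<longleftrightarrow> group G
     \<and> (\<forall>g\<in>carrier G. ring_automorphism (act g))
     \<and> act \<one>\<^bsub>G\<^esub> = id
     \<and> (\<forall>g\<in>carrier G. \<forall>h\<in>carrier G. act (g \<otimes>\<^bsub>G\<^esub> h) = act g \<circ> act h)"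

definition is_ideal :: "'a::comm_ring_1 set \<Rightarrow> bool" where
  "is_ideal I \<longleftrightarrow> 0 \<in> I \<and> (\<forall>x\<in>I. \<forall>y\<in>I. x + y \<in> I) \<and> (\<forall>r. \<forall>x\<in>I. r * x \<in> I)"

definition difference_ideal :: "('g, 'b) monoid_scheme \<Rightarrow> ('g \<Rightarrow> 'a::comm_ring_1 \<Rightarrow> 'a) \<Rightarrow> 'a set \<Rightarrow> bool" where
  "difference_ideal G act I \<longleftrightarrow> is_ideal I \<and> (\<forall>\<sigma>\<in>carrier G. act \<sigma> ` I \<subseteq> I)"

definition radical_ideal :: "'a::comm_ring_1 set \<Rightarrow> bool" where
  "radical_ideal I \<longleftrightarrow> is_ideal I \<and> (\<forall>x n. x ^ n \<in> I \<longrightarrow> x \<in> I)"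

definition mult_closed :: "'a::comm_ring_1 set \<Rightarrow> bool" where
  "mult_closed S \<longleftrightarrow> 1 \<in> S \<and> (\<forall>x\<in>S. \<forall>y\<in>S. x * y \<in> S)"

definition pseudoprime :: "('g, 'b) monoid_scheme \<Rightarrow> ('g \<Rightarrow> 'a::comm_ring_1 \<Rightarrow> 'a) \<Rightarrow> 'a set \<Rightarrow> bool" where
  "pseudoprime G act q \<longleftrightarrow> (\<exists>S. mult_closed S \<and>
     difference_ideal G act q \<and> q \<inter> S = {} \<and>
     (\<forall>J. difference_ideal G act J \<and> J \<inter> S = {} \<and> q \<subseteq> J \<longrightarrow> J = q))"

definition PSpec :: "('g, 'b) monoid_scheme \<Rightarrow> ('g \<Rightarrow> 'a::comm_ring_1 \<Rightarrow> 'a) \<Rightarrow> 'a set set" where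
  "PSpec G act = {q. pseudoprime G act q}"

definition PV :: "('g, 'b) monoid_scheme \<Rightarrow> ('g \<Rightarrow> 'a::comm_ring_1 \<Rightarrow> 'a) \<Rightarrow> 'a set \<Rightarrow> 'a set set" where
  "PV G act E = {q \<in> PSpec G act. E \<subseteq> q}"

definition PD :: "('g, 'b) monoid_scheme \<Rightarrow> ('g \<Rightarrow> 'a::comm_ring_1 \<Rightarrow> 'a) \<Rightarrow> 'a \<Rightarrow> 'a set set" where
  "PD G act s = PSpec G act - PV G act {s}"

definition pspec_closed :: "('g, 'b) monoid_scheme \<Rightarrow> ('g \<Rightarrow> 'a::comm_ring_1 \<Rightarrow> 'a) \<Rightarrow> 'a set set \<Rightarrow> bool" where
  "pspec_closed G act Z \<longleftrightarrow> (\<exists>E. Z = PV G act E)"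

definition pspec_open :: "('g, 'b) monoid_scheme \<Rightarrow> ('g \<Rightarrow> 'a::comm_ring_1 \<Rightarrow> 'a) \<Rightarrow> 'a set set \<Rightarrow> bool" where
  "pspec_open G act U \<longleftrightarrow> U \<subseteq> PSpec G act \<and> pspec_closed G act (PSpec G act - U)"

definition pspec_quasi_compact :: "('g, 'b) monoid_scheme \<Rightarrow> ('g \<Rightarrow> 'a::comm_ring_1 \<Rightarrow> 'a) \<Rightarrow> bool" where
  "pspec_quasi_compact G act \<longleftrightarrow> (\<forall>\<U>. (\<forall>U\<in>\<U>. pspec_open G act U) \<and> PSpec G act \<subseteq> \<Union>\<U> \<longrightarrow>
      (\<exists>\<F>\<subseteq>\<U>. finite \<F> \<and> PSpec G act \<subseteq> \<Union>\<F>))"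

end

theory Submission
  imports Defs
begin


lemma dr_group: "difference_ring G act \<Longrightarrow> group G"
  by (simp add: difference_ring_def)

lemma dr_aut: "difference_ring G act \<Longrightarrow> g \<in> carrier G \<Longrightarrow> ring_automorphism (act g)"
  by (simp add: difference_ring_def)

lemma act_add: "difference_ring G act \<Longrightarrow> g \<in> carrier G \<Longrightarrow> act g (x + y) = act g x + act g y"
  using dr_aut[of G act g] by (auto simp: ring_automorphism_def)

lemma act_mult: "difference_ring G act \<Longrightarrow> g \<in> carrier G \<Longrightarrow> act g (x * y) = act g x * act g y"
  using dr_aut[of G act g] by (auto simp: ring_automorphism_def)

lemma act_one: "difference_ring G act \<Longrightarrow> g \<in> carrier G \<Longrightarrow> act g 1 = 1"
  using dr_aut[of G act g] by (auto simp: ring_automorphism_def)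

lemma act_zero: "difference_ring G act \<Longrightarrow> g \<in> carrier G \<Longrightarrow> act g 0 = 0"
  using act_add[of G act g 0 0] by simp

lemma act_pow: "difference_ring G act \<Longrightarrow> g \<in> carrier G \<Longrightarrow> act g (x ^ n) = act g x ^ n"
  by (induction n) (simp_all add: act_one act_mult)

lemma act_id: "difference_ring G act \<Longrightarrow> act \<one>\<^bsub>G\<^esub> x = x"
  by (simp add: difference_ring_def)

lemma one_in: "difference_ring G act \<Longrightarrow> \<one>\<^bsub>G\<^esub> \<in> carrier G"
  using dr_group group.is_monoid monoid.one_closed by blast

lemma act_cancel:
  assumes "difference_ring G act" "g \<in> carrier G" "h \<in> carrier G"
  shows "act g (act (inv\<^bsub>G\<^esub> g \<otimes>\<^bsub>G\<^esub> h) x) = act h x"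
proof -
  have gr: "group G" using assms dr_group by blast
  have ic: "inv\<^bsub>G\<^esub> g \<in> carrier G" using group.inv_closed[OF gr assms(2)] .
  have c: "inv\<^bsub>G\<^esub> g \<otimes>\<^bsub>G\<^esub> h \<in> carrier G"
    using monoid.m_closed[OF group.is_monoid[OF gr] ic assms(3)] .
  have "act g (act (inv\<^bsub>G\<^esub> g \<otimes>\<^bsub>G\<^esub> h) x) = act (g \<otimes>\<^bsub>G\<^esub> (inv\<^bsub>G\<^esub> g \<otimes>\<^bsub>G\<^esub> h)) x"
    using assms c by (simp add: difference_ring_def)
  also have "g \<otimes>\<^bsub>G\<^esub> (inv\<^bsub>G\<^esub> g \<otimes>\<^bsub>G\<^esub> h) = h"
    proof -
    interpret G: group G by (rule gr)
    show ?thesis using assms ic by (simp add: G.m_assoc[symmetric])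
  qed
  finally show ?thesis .
qed

lemma ideal_multr: "is_ideal I \<Longrightarrow> x \<in> I \<Longrightarrow> x * r \<in> I"
  unfolding is_ideal_def by (metis mult.commute)

lemma ideal_multl: "is_ideal I \<Longrightarrow> x \<in> I \<Longrightarrow> r * x \<in> I"
  unfolding is_ideal_def by blast

lemma di_act: "difference_ideal G act I \<Longrightarrow> \<sigma> \<in> carrier G \<Longrightarrow> x \<in> I \<Longrightarrow> act \<sigma> x \<in> I"
  unfolding difference_ideal_def by blast

lemma di_add: "difference_ideal G act I \<Longrightarrow> x \<in> I \<Longrightarrow> y \<in> I \<Longrightarrow> x + y \<in> I"
  unfolding difference_ideal_def is_ideal_def by blast

lemma di_zero: "difference_ideal G act I \<Longrightarrow> 0 \<in> I"
  unfolding difference_ideal_def is_ideal_def by blast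

lemma di_mult: "difference_ideal G act I \<Longrightarrow> x \<in> I \<Longrightarrow> r * x \<in> I"
  unfolding difference_ideal_def is_ideal_def by blast

definition dgen where
  "dgen G act E = \<Inter>{J. difference_ideal G act J \<and> E \<subseteq> J}"

lemma dgen_di: "difference_ideal G act (dgen G act E)"
  unfolding difference_ideal_def is_ideal_def
proof (intro conjI ballI allI subsetI)
  show "0 \<in> dgen G act E" unfolding dgen_def using di_zero by blast
next
  fix x y assume "x \<in> dgen G act E" "y \<in> dgen G act E"
  then show "x + y \<in> dgen G act E" unfolding dgen_def using di_add by blast
next
  fix r x assume "x \<in> dgen G act E"
  then show "r * x \<in> dgen G act E" unfolding dgen_def using di_mult by blast
next
  fix \<sigma> z assume s: "\<sigma> \<in> carrier G" and "z \<in> act \<sigma> ` dgen G act E"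
  then obtain x where x: "x \<in> dgen G act E" "z = act \<sigma> x" by blast
  show "z \<in> dgen G act E" unfolding dgen_def
  proof
    fix J assume "J \<in> {J. difference_ideal G act J \<and> E \<subseteq> J}"
    then have J: "difference_ideal G act J" "x \<in> J" using x(1) unfolding dgen_def by blast+
    show "z \<in> J" using di_act[OF J(1) s J(2)] x(2) by simp
  qed
qed

lemma dgen_sub: "E \<subseteq> dgen G act E"
  unfolding dgen_def by blast

lemma dgen_least: "difference_ideal G act J \<Longrightarrow> E \<subseteq> J \<Longrightarrow> dgen G act E \<subseteq> J"
  unfolding dgen_def by blast

lemma dgen_mono: "E \<subseteq> F \<Longrightarrow> dgen G act E \<subseteq> dgen G act F"
  by (meson dgen_di dgen_least dgen_sub order_trans)

lemma zorn_di:
  assumes "difference_ideal G act I" "I \<inter> S = {}"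
  shows "\<exists>q. difference_ideal G act q \<and> I \<subseteq> q \<and> q \<inter> S = {} \<and>
     (\<forall>J. difference_ideal G act J \<and> J \<inter> S = {} \<and> q \<subseteq> J \<longrightarrow> J = q)"
proof -
  let ?A = "{J. difference_ideal G act J \<and> J \<inter> S = {} \<and> I \<subseteq> J}"
  have "\<forall>C\<in>chains ?A. \<exists>U\<in>?A. \<forall>X\<in>C. X \<subseteq> U"
  proof
    fix C assume C: "C \<in> chains ?A"
    show "\<exists>U\<in>?A. \<forall>X\<in>C. X \<subseteq> U"
    proof (cases "C = {}")
      case True then show ?thesis using assms by auto
    next
      case False
      have sub: "C \<subseteq> ?A" and ch: "\<forall>X\<in>C. \<forall>Y\<in>C. X \<subseteq> Y \<or> Y \<subseteq> X"
        using C unfolding chains_def chain_subset_def by blast+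
      have dX: "\<And>X. X \<in> C \<Longrightarrow> difference_ideal G act X" using sub by blast
      have "difference_ideal G act (\<Union>C)"
        unfolding difference_ideal_def is_ideal_def
      proof (intro conjI ballI allI subsetI)
        obtain X where "X \<in> C" using False by blast
        then show "0 \<in> \<Union>C" using dX di_zero by blast
      next
        fix x y assume "x \<in> \<Union>C" "y \<in> \<Union>C"
        then obtain X Y where XY: "X \<in> C" "Y \<in> C" "x \<in> X" "y \<in> Y" by blast
        have "X \<subseteq> Y \<or> Y \<subseteq> X" using ch XY(1,2) by blast
        then show "x + y \<in> \<Union>C"
        proof
          assume "X \<subseteq> Y"
          then have "x + y \<in> Y" using di_add[OF dX[OF XY(2)]] XY by blast
          then show ?thesis using XY(2) by blast
        next
          assume "Y \<subseteq> X"
          then have "x + y \<in> X" using di_add[OF dX[OF XY(1)]] XY by blast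
          then show ?thesis using XY(1) by blast
        qed
      next
        fix r x assume "x \<in> \<Union>C"
        then obtain X where X: "X \<in> C" "x \<in> X" by blast
        then have "r * x \<in> X" using di_mult[OF dX[OF X(1)]] by blast
        then show "r * x \<in> \<Union>C" using X by blast
      next
        fix \<sigma> z assume s: "\<sigma> \<in> carrier G" and "z \<in> act \<sigma> ` \<Union>C"
        then obtain x X where X: "X \<in> C" "x \<in> X" "z = act \<sigma> x" by blast
        then have "z \<in> X" using di_act[OF dX[OF X(1)] s] by blast
        then show "z \<in> \<Union>C" using X by blast
      qed
      then have "\<Union>C \<in> ?A" using sub False by blast
      then show ?thesis by blast
    qed
  qed
  from Zorn_Lemma2[OF this] obtain M where M: "M \<in> ?A" and Mx: "\<forall>X\<in>?A. M \<subseteq> X \<longrightarrow> X = M" by blast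
  have "\<forall>J. difference_ideal G act J \<and> J \<inter> S = {} \<and> M \<subseteq> J \<longrightarrow> J = M"
  proof (intro allI impI)
    fix J assume J: "difference_ideal G act J \<and> J \<inter> S = {} \<and> M \<subseteq> J"
    then have "I \<subseteq> J" using M by blast
    then have "J \<in> ?A" using J by blast
    then show "J = M" using Mx J by blast
  qed
  then show ?thesis using M by blast
qed



lemma ann_di:
  assumes dr: "difference_ring G act" and dq: "difference_ideal G act q"
  shows "difference_ideal G act {x. \<forall>\<sigma>\<in>carrier G. act \<sigma> c * x \<in> q}"
  unfolding difference_ideal_def is_ideal_def
proof (intro conjI ballI allI subsetI)
  show "0 \<in> {x. \<forall>\<sigma>\<in>carrier G. act \<sigma> c * x \<in> q}" using di_zero[OF dq] by simp
next
  fix x y assume x: "x \<in> {x. \<forall>\<sigma>\<in>carrier G. act \<sigma> c * x \<in> q}"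
    and y: "y \<in> {x. \<forall>\<sigma>\<in>carrier G. act \<sigma> c * x \<in> q}"
  show "x + y \<in> {x. \<forall>\<sigma>\<in>carrier G. act \<sigma> c * x \<in> q}"
  proof (intro CollectI ballI)
    fix \<sigma> assume s: "\<sigma> \<in> carrier G"
    have "act \<sigma> c * (x + y) = act \<sigma> c * x + act \<sigma> c * y" by (simp add: distrib_left)
    then show "act \<sigma> c * (x + y) \<in> q" using x y s di_add[OF dq] by auto
  qed
next
  fix r x assume x: "x \<in> {x. \<forall>\<sigma>\<in>carrier G. act \<sigma> c * x \<in> q}"
  show "r * x \<in> {x. \<forall>\<sigma>\<in>carrier G. act \<sigma> c * x \<in> q}"
  proof (intro CollectI ballI)
    fix \<sigma> assume s: "\<sigma> \<in> carrier G"
    have e: "act \<sigma> c * (r * x) = r * (act \<sigma> c * x)" by (simp add: ac_simps)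
    have "act \<sigma> c * x \<in> q" using x s by blast
    then have "r * (act \<sigma> c * x) \<in> q" by (rule di_mult[OF dq])
    then show "act \<sigma> c * (r * x) \<in> q" unfolding e .
  qed
next
  fix \<rho> z assume r: "\<rho> \<in> carrier G" and "z \<in> act \<rho> ` {x. \<forall>\<sigma>\<in>carrier G. act \<sigma> c * x \<in> q}"
  then obtain x where x: "\<forall>\<sigma>\<in>carrier G. act \<sigma> c * x \<in> q" and z: "z = act \<rho> x" by blast
  show "z \<in> {x. \<forall>\<sigma>\<in>carrier G. act \<sigma> c * x \<in> q}"
  proof (intro CollectI ballI)
    fix \<sigma> assume s: "\<sigma> \<in> carrier G"
    have gr: "group G" using dr dr_group by blast
    have ic: "inv\<^bsub>G\<^esub> \<rho> \<in> carrier G" using group.inv_closed[OF gr r] .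
    have c: "inv\<^bsub>G\<^esub> \<rho> \<otimes>\<^bsub>G\<^esub> \<sigma> \<in> carrier G"
      using monoid.m_closed[OF group.is_monoid[OF gr] ic s] .
    have "act \<sigma> c * z = act \<rho> (act (inv\<^bsub>G\<^esub> \<rho> \<otimes>\<^bsub>G\<^esub> \<sigma>) c * x)"
      using z act_mult[OF dr r] act_cancel[OF dr r s] by simp
    moreover have "act (inv\<^bsub>G\<^esub> \<rho> \<otimes>\<^bsub>G\<^esub> \<sigma>) c * x \<in> q" using x c by blast
    ultimately show "act \<sigma> c * z \<in> q" using di_act[OF dq r] by simp
  qed
qed

lemma ann_sup:
  assumes dq: "difference_ideal G act q"
  shows "q \<subseteq> {x. \<forall>\<sigma>\<in>carrier G. act \<sigma> c * x \<in> q}"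
  using di_mult[OF dq] by blast

lemma pp_elim:
  assumes "pseudoprime G act q"
  obtains S where "mult_closed S" "difference_ideal G act q" "q \<inter> S = {}"
    "\<And>J. difference_ideal G act J \<Longrightarrow> J \<inter> S = {} \<Longrightarrow> q \<subseteq> J \<Longrightarrow> J = q"
  using assms unfolding pseudoprime_def by blast

lemma pp_di: "pseudoprime G act q \<Longrightarrow> difference_ideal G act q"
  unfolding pseudoprime_def by blast

lemma pp_proper: "pseudoprime G act q \<Longrightarrow> 1 \<notin> q"
  unfolding pseudoprime_def mult_closed_def by blast

lemma pp_prime:
  assumes dr: "difference_ring G act" and pq: "pseudoprime G act q"
    and a: "a \<notin> q" and b: "b \<notin> q"
  shows "\<exists>\<sigma>\<in>carrier G. \<exists>\<tau>\<in>carrier G. act \<sigma> a * act \<tau> b \<notin> q"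
proof (rule ccontr)
  assume "\<not> ?thesis"
  then have H: "\<And>\<sigma> \<tau>. \<sigma> \<in> carrier G \<Longrightarrow> \<tau> \<in> carrier G \<Longrightarrow> act \<sigma> a * act \<tau> b \<in> q" by blast
  obtain S where mc: "mult_closed S" and dq: "difference_ideal G act q" and qS: "q \<inter> S = {}"
    and mx: "\<And>J. difference_ideal G act J \<Longrightarrow> J \<inter> S = {} \<Longrightarrow> q \<subseteq> J \<Longrightarrow> J = q"
    using pp_elim[OF pq] by blast
  have ext: "\<exists>s\<in>S. s \<in> dgen G act (q \<union> {x})" if "x \<notin> q" for x
  proof (rule ccontr)
    assume "\<not> (\<exists>s\<in>S. s \<in> dgen G act (q \<union> {x}))"
    then have "dgen G act (q \<union> {x}) \<inter> S = {}" by blast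
    moreover have "q \<subseteq> dgen G act (q \<union> {x})" "x \<in> dgen G act (q \<union> {x})"
      using dgen_sub[of "q \<union> {x}" G act] by auto
    ultimately show False using mx[OF dgen_di] that by blast
  qed
  obtain s1 where s1: "s1 \<in> S" "s1 \<in> dgen G act (q \<union> {a})" using ext[OF a] by blast
  obtain s2 where s2: "s2 \<in> S" "s2 \<in> dgen G act (q \<union> {b})" using ext[OF b] by blast
  have one: "\<one>\<^bsub>G\<^esub> \<in> carrier G" using one_in[OF dr] .
  let ?L = "{x. \<forall>\<sigma>\<in>carrier G. act \<sigma> b * x \<in> q}"
  have "a \<in> ?L"
  proof (intro CollectI ballI)
    fix \<tau> assume t: "\<tau> \<in> carrier G"
    show "act \<tau> b * a \<in> q" using H[OF one t] act_id[OF dr] by (simp add: mult.commute)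
  qed
  then have "q \<union> {a} \<subseteq> ?L" using ann_sup[OF dq, of b] by blast
  then have JL: "dgen G act (q \<union> {a}) \<subseteq> ?L"
    by (rule dgen_least[OF ann_di[OF dr dq]])
  let ?M = "{x. \<forall>\<sigma>\<in>carrier G. act \<sigma> s1 * x \<in> q}"
  have "b \<in> ?M"
  proof (intro CollectI ballI)
    fix \<sigma> assume s: "\<sigma> \<in> carrier G"
    have "act \<sigma> s1 \<in> dgen G act (q \<union> {a})" using di_act[OF dgen_di s s1(2)] .
    then have "act \<sigma> s1 \<in> ?L" using JL by blast
    then have "act \<one>\<^bsub>G\<^esub> b * act \<sigma> s1 \<in> q" using one by blast
    then show "act \<sigma> s1 * b \<in> q" using act_id[OF dr] by (simp add: mult.commute)
  qed
  then have "q \<union> {b} \<subseteq> ?M" using ann_sup[OF dq, of s1] by blast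
  then have "dgen G act (q \<union> {b}) \<subseteq> ?M"
    by (rule dgen_least[OF ann_di[OF dr dq]])
  then have "act \<one>\<^bsub>G\<^esub> s1 * s2 \<in> q" using s2 one by blast
  then have "s1 * s2 \<in> q" using act_id[OF dr] by simp
  moreover have "s1 * s2 \<in> S" using mc s1 s2 by (simp add: mult_closed_def)
  ultimately show False using qS by blast
qed

lemma di_sum:
  assumes dI: "difference_ideal G act I"
  shows "finite K \<Longrightarrow> (\<And>k. k \<in> K \<Longrightarrow> f k \<in> I) \<Longrightarrow> sum f K \<in> I"
proof (induction K rule: finite_induct)
  case empty then show ?case using di_zero[OF dI] by simp
next
  case (insert k K) then show ?case using di_add[OF dI] by simp
qed

lemma mc_pow: "mult_closed S \<Longrightarrow> x \<in> S \<Longrightarrow> x ^ n \<in> S"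
  by (induction n) (auto simp: mult_closed_def)

lemma pp_radical:
  assumes dr: "difference_ring G act" and pq: "pseudoprime G act q" and xn: "x ^ n \<in> q"
  shows "x \<in> q"
proof -
  obtain S where mc: "mult_closed S" and dq: "difference_ideal G act q" and qS: "q \<inter> S = {}"
    and mx: "\<And>J. difference_ideal G act J \<Longrightarrow> J \<inter> S = {} \<Longrightarrow> q \<subseteq> J \<Longrightarrow> J = q"
    using pp_elim[OF pq] by blast
  let ?r = "{x. \<exists>n. x ^ n \<in> q}"
  have "difference_ideal G act ?r"
    unfolding difference_ideal_def is_ideal_def
  proof (intro conjI ballI allI subsetI)
    have "0 ^ 1 \<in> q" using di_zero[OF dq] by simp
    then show "0 \<in> ?r" by blast
  next
    fix x y assume "x \<in> ?r" "y \<in> ?r"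
    then obtain m n where m: "x ^ m \<in> q" and n: "y ^ n \<in> q" by blast
    have "(x + y) ^ (m + n) = (\<Sum>k\<le>m+n. of_nat ((m+n) choose k) * x ^ k * y ^ (m + n - k))"
      by (rule binomial_ring)
    also have "\<dots> \<in> q"
    proof (rule di_sum[OF dq], simp)
      fix k assume k: "k \<in> {..m+n}"
      show "of_nat ((m+n) choose k) * x ^ k * y ^ (m + n - k) \<in> q"
      proof (cases "m \<le> k")
        case True
        then have "x ^ k = x ^ m * x ^ (k - m)" by (simp add: power_add[symmetric])
        then have eq: "of_nat ((m+n) choose k) * x ^ k * y ^ (m + n - k)
          = (of_nat ((m+n) choose k) * x ^ (k - m) * y ^ (m + n - k)) * x ^ m"
          by (simp add: ac_simps)
        show ?thesis unfolding eq by (rule di_mult[OF dq m])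
      next
        case False
        then have "m + n - k = n + (m - k)" by simp
        then have "y ^ (m + n - k) = y ^ n * y ^ (m - k)" by (simp add: power_add)
        then have eq: "of_nat ((m+n) choose k) * x ^ k * y ^ (m + n - k)
          = (of_nat ((m+n) choose k) * x ^ k * y ^ (m - k)) * y ^ n"
          by (simp add: ac_simps)
        show ?thesis unfolding eq by (rule di_mult[OF dq n])
      qed
    qed
    finally have "(x + y) ^ (m + n) \<in> q" .
    then show "x + y \<in> ?r" by blast
  next
    fix r x assume "x \<in> ?r"
    then obtain n where n: "x ^ n \<in> q" by blast
    have "(r * x) ^ n = r ^ n * x ^ n" by (simp add: power_mult_distrib)
    then have "(r * x) ^ n \<in> q" using di_mult[OF dq n] by simp
    then show "r * x \<in> ?r" by blast
  next
    fix \<sigma> z assume s: "\<sigma> \<in> carrier G" and "z \<in> act \<sigma> ` ?r"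
    then obtain x n where n: "x ^ n \<in> q" and z: "z = act \<sigma> x" by blast
    have "z ^ n = act \<sigma> (x ^ n)" using z act_pow[OF dr s] by simp
    then have "z ^ n \<in> q" using di_act[OF dq s n] by simp
    then show "z \<in> ?r" by blast
  qed
  moreover have "?r \<inter> S = {}"
  proof -
    { fix y assume "y \<in> ?r" "y \<in> S"
      then obtain k where "y ^ k \<in> q" by blast
      moreover have "y ^ k \<in> S" using mc_pow[OF mc \<open>y \<in> S\<close>] .
      ultimately have False using qS by blast }
    then show ?thesis by blast
  qed
  moreover have "q \<subseteq> ?r"
  proof
    fix y assume "y \<in> q" then have "y ^ 1 \<in> q" by simp
    then show "y \<in> ?r" by blast
  qed
  ultimately have "?r = q" by (rule mx)
  then show ?thesis using xn by blast
qed

lemma pp_exists: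
  assumes "difference_ideal G act I" "mult_closed S" "I \<inter> S = {}"
  shows "\<exists>q. pseudoprime G act q \<and> I \<subseteq> q \<and> q \<inter> S = {}"
  using zorn_di[OF assms(1,3)] assms(2) unfolding pseudoprime_def by blast

lemma mc_powers: "mult_closed (range (\<lambda>n. x ^ n))"
  unfolding mult_closed_def
proof (intro conjI ballI)
  show "1 \<in> range (\<lambda>n. x ^ n)" by (metis power_0 rangeI)
next
  fix a b assume "a \<in> range (\<lambda>n. x ^ n)" "b \<in> range (\<lambda>n. x ^ n)"
  then obtain m n where "a = x ^ m" "b = x ^ n" by blast
  then have "a * b = x ^ (m + n)" by (simp add: power_add)
  then show "a * b \<in> range (\<lambda>n. x ^ n)" by blast
qed

lemma PD_iff: "q \<in> PD G act s \<longleftrightarrow> pseudoprime G act q \<and> s \<notin> q"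
  by (auto simp: PD_def PV_def PSpec_def)

lemma PV_iff: "q \<in> PV G act E \<longleftrightarrow> pseudoprime G act q \<and> E \<subseteq> q"
  by (auto simp: PV_def PSpec_def)



lemma dgen_finite:
  assumes "x \<in> dgen G act E"
  shows "\<exists>F. finite F \<and> F \<subseteq> E \<and> x \<in> dgen G act F"
proof -
  let ?D = "\<Union>{dgen G act F | F. finite F \<and> F \<subseteq> E}"
  have "difference_ideal G act ?D"
    unfolding difference_ideal_def is_ideal_def
  proof (intro conjI ballI allI subsetI)
    have "0 \<in> dgen G act {}" using di_zero[OF dgen_di] .
    then show "0 \<in> ?D" by blast
  next
    fix x y assume "x \<in> ?D" "y \<in> ?D"
    then obtain F1 F2 where F: "finite F1" "F1 \<subseteq> E" "x \<in> dgen G act F1"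
      "finite F2" "F2 \<subseteq> E" "y \<in> dgen G act F2" by blast
    have "x \<in> dgen G act (F1 \<union> F2)" using F(3) dgen_mono[of F1 "F1 \<union> F2"] by blast
    moreover have "y \<in> dgen G act (F1 \<union> F2)" using F(6) dgen_mono[of F2 "F1 \<union> F2"] by blast
    ultimately have "x + y \<in> dgen G act (F1 \<union> F2)" using di_add[OF dgen_di] by blast
    moreover have "finite (F1 \<union> F2)" "F1 \<union> F2 \<subseteq> E" using F by auto
    ultimately show "x + y \<in> ?D" by blast
  next
    fix r x assume "x \<in> ?D"
    then obtain F where F: "finite F" "F \<subseteq> E" "x \<in> dgen G act F" by blast
    then have "r * x \<in> dgen G act F" using di_mult[OF dgen_di] by blast
    then show "r * x \<in> ?D" using F by blast
  next
    fix \<sigma> z assume s: "\<sigma> \<in> carrier G" and "z \<in> act \<sigma> ` ?D"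
    then obtain x F where F: "finite F" "F \<subseteq> E" "x \<in> dgen G act F" "z = act \<sigma> x" by blast
    then have "z \<in> dgen G act F" using di_act[OF dgen_di s] by blast
    then show "z \<in> ?D" using F by blast
  qed
  moreover have "E \<subseteq> ?D"
  proof
    fix e assume "e \<in> E"
    then have "e \<in> dgen G act {e}" "finite {e}" "{e} \<subseteq> E" using dgen_sub by auto
    then show "e \<in> ?D" by blast
  qed
  ultimately have "dgen G act E \<subseteq> ?D" by (rule dgen_least)
  then show ?thesis using assms by blast
qed

lemma inter_pp:
  assumes dr: "difference_ring G act" and Z: "\<And>q. q \<in> Z \<Longrightarrow> pseudoprime G act q"
  shows "radical_ideal (\<Inter>Z) \<and> difference_ideal G act (\<Inter>Z)"
proof -
  have d: "\<And>q. q \<in> Z \<Longrightarrow> difference_ideal G act q" using Z pp_di by blast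
  have di: "difference_ideal G act (\<Inter>Z)"
    unfolding difference_ideal_def is_ideal_def
  proof (intro conjI ballI allI subsetI)
    show "0 \<in> \<Inter>Z" using d di_zero by blast
  next
    fix x y assume "x \<in> \<Inter>Z" "y \<in> \<Inter>Z"
    then show "x + y \<in> \<Inter>Z" using d di_add by blast
  next
    fix r x assume "x \<in> \<Inter>Z"
    then show "r * x \<in> \<Inter>Z" using d di_mult by blast
  next
    fix \<sigma> z assume s: "\<sigma> \<in> carrier G" and "z \<in> act \<sigma> ` \<Inter>Z"
    then obtain x where x: "x \<in> \<Inter>Z" "z = act \<sigma> x" by blast
    show "z \<in> \<Inter>Z"
    proof
      fix q assume q: "q \<in> Z"
      then have "x \<in> q" using x by blast
      then show "z \<in> q" using di_act[OF d[OF q] s] x(2) by simp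
    qed
  qed
  have "\<forall>x n. x ^ n \<in> \<Inter>Z \<longrightarrow> x \<in> \<Inter>Z"
  proof (intro allI impI)
    fix x n assume xn: "x ^ n \<in> \<Inter>Z"
    show "x \<in> \<Inter>Z"
    proof
      fix q assume q: "q \<in> Z"
      then have "x ^ n \<in> q" using xn by blast
      then show "x \<in> q" using pp_radical[OF dr Z[OF q]] by blast
    qed
  qed
  then show ?thesis using di unfolding radical_ideal_def difference_ideal_def by blast
qed

lemma PV_inter:
  assumes dr: "difference_ring G act" and t: "radical_ideal t" "difference_ideal G act t"
  shows "\<Inter>(PV G act t) = t"
proof
  show "t \<subseteq> \<Inter>(PV G act t)" by (auto simp: PV_iff)
next
  show "\<Inter>(PV G act t) \<subseteq> t"
  proof
    fix x assume x: "x \<in> \<Inter>(PV G act t)"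
    show "x \<in> t"
    proof (rule ccontr)
      assume nx: "x \<notin> t"
      have "t \<inter> range (\<lambda>n. x ^ n) = {}"
        using nx t(1) unfolding radical_ideal_def by blast
      then obtain q where q: "pseudoprime G act q" "t \<subseteq> q" "q \<inter> range (\<lambda>n. x ^ n) = {}"
        using pp_exists[OF t(2) mc_powers] by blast
      then have "q \<in> PV G act t" by (simp add: PV_iff)
      then have "x \<in> q" using x by blast
      moreover have "x \<in> range (\<lambda>n. x ^ n)" by (metis power_one_right rangeI)
      ultimately show False using q(3) by blast
    qed
  qed
qed

lemma closed_PV:
  assumes dr: "difference_ring G act" and Z: "pspec_closed G act Z"
  shows "PV G act (\<Inter>Z) = Z \<and> radical_ideal (\<Inter>Z) \<and> difference_ideal G act (\<Inter>Z)"
proof -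
  obtain E where E: "Z = PV G act E" using Z unfolding pspec_closed_def by blast
  have pp: "\<And>q. q \<in> Z \<Longrightarrow> pseudoprime G act q" using E by (simp add: PV_iff)
  have "PV G act (\<Inter>Z) = Z"
  proof
    show "Z \<subseteq> PV G act (\<Inter>Z)" using pp by (auto simp: PV_iff)
  next
    show "PV G act (\<Inter>Z) \<subseteq> Z"
    proof
      fix q assume q: "q \<in> PV G act (\<Inter>Z)"
      have "E \<subseteq> \<Inter>Z" using E by (auto simp: PV_iff)
      then have "E \<subseteq> q" using q by (auto simp: PV_iff)
      then show "q \<in> Z" using q E by (simp add: PV_iff)
    qed
  qed
  then show ?thesis using inter_pp[OF dr pp] by blast
qed



lemma part1:
  assumes dr: "difference_ring G act"
  shows "PD G act s \<inter> PD G act t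
            = (\<Union>\<sigma>\<in>carrier G. \<Union>\<tau>\<in>carrier G. PD G act (act \<sigma> s * act \<tau> t))"
proof
  show "PD G act s \<inter> PD G act t \<subseteq> (\<Union>\<sigma>\<in>carrier G. \<Union>\<tau>\<in>carrier G. PD G act (act \<sigma> s * act \<tau> t))"
  proof
    fix q assume "q \<in> PD G act s \<inter> PD G act t"
    then have q: "pseudoprime G act q" "s \<notin> q" "t \<notin> q" by (auto simp: PD_iff)
    then obtain \<sigma> \<tau> where "\<sigma> \<in> carrier G" "\<tau> \<in> carrier G" "act \<sigma> s * act \<tau> t \<notin> q"
      using pp_prime[OF dr q] by blast
    then show "q \<in> (\<Union>\<sigma>\<in>carrier G. \<Union>\<tau>\<in>carrier G. PD G act (act \<sigma> s * act \<tau> t))"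
      using q(1) by (auto simp: PD_iff)
  qed
next
  show "(\<Union>\<sigma>\<in>carrier G. \<Union>\<tau>\<in>carrier G. PD G act (act \<sigma> s * act \<tau> t)) \<subseteq> PD G act s \<inter> PD G act t"
  proof
    fix q assume "q \<in> (\<Union>\<sigma>\<in>carrier G. \<Union>\<tau>\<in>carrier G. PD G act (act \<sigma> s * act \<tau> t))"
    then obtain \<sigma> \<tau> where st: "\<sigma> \<in> carrier G" "\<tau> \<in> carrier G"
      and q: "pseudoprime G act q" "act \<sigma> s * act \<tau> t \<notin> q" by (auto simp: PD_iff)
    have dq: "difference_ideal G act q" using pp_di[OF q(1)] .
    have "s \<notin> q"
    proof
      assume "s \<in> q"
      then have "act \<sigma> s \<in> q" using di_act[OF dq st(1)] by blast
      then have "act \<tau> t * act \<sigma> s \<in> q" using di_mult[OF dq] by blast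
      then show False using q(2) by (simp add: mult.commute)
    qed
    moreover have "t \<notin> q"
    proof
      assume "t \<in> q"
      then have "act \<tau> t \<in> q" using di_act[OF dq st(2)] by blast
      then have "act \<sigma> s * act \<tau> t \<in> q" using di_mult[OF dq] by blast
      then show False using q(2) by simp
    qed
    ultimately show "q \<in> PD G act s \<inter> PD G act t" using q(1) by (simp add: PD_iff)
  qed
qed

lemma part2:
  assumes dr: "difference_ring G act"
  shows "PD G act s = {} \<longleftrightarrow> (\<exists>n. s ^ n = 0)"
proof
  assume e: "PD G act s = {}"
  show "\<exists>n. s ^ n = 0"
  proof (rule ccontr)
    assume "\<not> ?thesis"
    then have nz: "\<And>n. s ^ n \<noteq> 0" by blast
    have d0: "difference_ideal G act {0}"
      unfolding difference_ideal_def is_ideal_def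
    proof (intro conjI ballI allI subsetI)
      fix \<sigma> z assume s: "\<sigma> \<in> carrier G" and "z \<in> act \<sigma> ` {0}"
      then have "z = act \<sigma> 0" by blast
      then show "z \<in> {0}" using act_zero[OF dr s] by simp
    qed simp_all
    have dj: "{0} \<inter> range (\<lambda>n. s ^ n) = {}"
    proof (rule ccontr)
      assume "{0} \<inter> range (\<lambda>n. s ^ n) \<noteq> {}"
      then obtain x where x: "x \<in> {0}" "x \<in> range (\<lambda>n. s ^ n)" by blast
      then obtain n where "x = s ^ n" by blast
      then show False using nz[of n] x(1) by simp
    qed
    then obtain q where q: "pseudoprime G act q" "q \<inter> range (\<lambda>n. s ^ n) = {}"
      using pp_exists[OF d0 mc_powers[of s] dj] by blast
    have "s \<in> range (\<lambda>n. s ^ n)" by (metis power_one_right rangeI)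
    then have "s \<notin> q" using q(2) by blast
    then have "q \<in> PD G act s" using q(1) by (simp add: PD_iff)
    then show False using e by blast
  qed
next
  assume "\<exists>n. s ^ n = 0"
  then obtain n where n: "s ^ n = 0" by blast
  show "PD G act s = {}"
  proof (rule ccontr)
    assume "PD G act s \<noteq> {}"
    then obtain q where q: "pseudoprime G act q" "s \<notin> q" by (auto simp: PD_iff)
    have "s ^ n \<in> q" using n di_zero[OF pp_di[OF q(1)]] by simp
    then show False using pp_radical[OF dr q(1)] q(2) by blast
  qed
qed

lemma part3:
  assumes dr: "difference_ring G act"
  shows "pspec_quasi_compact G act"
  unfolding pspec_quasi_compact_def
proof (intro allI impI)
  fix \<U> assume H: "(\<forall>U\<in>\<U>. pspec_open G act U) \<and> PSpec G act \<subseteq> \<Union>\<U>"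
  define EU where "EU U = (SOME E. PSpec G act - U = PV G act E)" for U
  have EU: "PSpec G act - U = PV G act (EU U)" if "U \<in> \<U>" for U
  proof -
    have "\<exists>E. PSpec G act - U = PV G act E"
      using H that unfolding pspec_open_def pspec_closed_def by blast
    then show ?thesis unfolding EU_def by (rule someI_ex)
  qed
  let ?E = "\<Union>(EU ` \<U>)"
  have one: "1 \<in> dgen G act ?E"
  proof (rule ccontr)
    assume "1 \<notin> dgen G act ?E"
    then have "dgen G act ?E \<inter> {1} = {}" by blast
    moreover have "mult_closed {1}" by (simp add: mult_closed_def)
    ultimately obtain q where q: "pseudoprime G act q" "dgen G act ?E \<subseteq> q"
      using pp_exists[OF dgen_di, of "{1}" G act ?E] by blast
    have "q \<in> PSpec G act" using q(1) by (simp add: PSpec_def)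
    then obtain U where U: "U \<in> \<U>" "q \<in> U" using H by blast
    have "EU U \<subseteq> q" using q(2) dgen_sub[of ?E G act] U(1) by blast
    then have "q \<in> PV G act (EU U)" using q(1) by (simp add: PV_iff)
    then show False using EU[OF U(1)] U(2) by blast
  qed
  obtain F where F: "finite F" "F \<subseteq> ?E" "1 \<in> dgen G act F"
    using dgen_finite[OF one] by blast
  define pick where "pick f = (SOME U. U \<in> \<U> \<and> f \<in> EU U)" for f
  have pick: "pick f \<in> \<U> \<and> f \<in> EU (pick f)" if "f \<in> F" for f
  proof -
    have "\<exists>U. U \<in> \<U> \<and> f \<in> EU U" using F(2) that by blast
    then show ?thesis unfolding pick_def by (rule someI_ex)
  qed
  show "\<exists>\<F>\<subseteq>\<U>. finite \<F> \<and> PSpec G act \<subseteq> \<Union>\<F>"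
  proof (intro exI conjI)
    show "pick ` F \<subseteq> \<U>" using pick by blast
    show "finite (pick ` F)" using F(1) by blast
    show "PSpec G act \<subseteq> \<Union>(pick ` F)"
    proof
      fix q assume qS: "q \<in> PSpec G act"
      show "q \<in> \<Union>(pick ` F)"
      proof (rule ccontr)
        assume nq: "q \<notin> \<Union>(pick ` F)"
        have "F \<subseteq> q"
        proof
          fix f assume f: "f \<in> F"
          then have "q \<notin> pick f" using nq by blast
          then have "q \<in> PV G act (EU (pick f))" using EU[of "pick f"] pick[OF f] qS by blast
          then show "f \<in> q" using pick[OF f] by (auto simp: PV_iff)
        qed
        have pq: "pseudoprime G act q" using qS by (simp add: PSpec_def)
        have "dgen G act F \<subseteq> q" using dgen_least[OF pp_di[OF pq] \<open>F \<subseteq> q\<close>] .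
        then show False using F(3) pp_proper[OF pq] by blast
      qed
    qed
  qed
qed

theorem proposition3p3:
  fixes G :: "('g, 'b) monoid_scheme" and act :: "'g \<Rightarrow> 'a::comm_ring_1 \<Rightarrow> 'a"
  assumes "difference_ring G act"
  shows "(\<forall>s t. PD G act s \<inter> PD G act t
            = (\<Union>\<sigma>\<in>carrier G. \<Union>\<tau>\<in>carrier G. PD G act (act \<sigma> s * act \<tau> t)))
       \<and> (\<forall>s. PD G act s = {} \<longleftrightarrow> (\<exists>n. s ^ n = 0))
       \<and> pspec_quasi_compact G act
       \<and> bij_betw (PV G act) {t. radical_ideal t \<and> difference_ideal G act t}
                              {Z. pspec_closed G act Z}
       \<and> (\<forall>t. radical_ideal t \<and> difference_ideal G act t \<longrightarrow> \<Inter>(PV G act t) = t)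
       \<and> (\<forall>Z. pspec_closed G act Z \<longrightarrow> PV G act (\<Inter>Z) = Z
              \<and> radical_ideal (\<Inter>Z) \<and> difference_ideal G act (\<Inter>Z))"
proof -
  note dr = assms
  have inv: "\<forall>t. radical_ideal t \<and> difference_ideal G act t \<longrightarrow> \<Inter>(PV G act t) = t"
  proof (intro allI impI)
    fix t assume "radical_ideal t \<and> difference_ideal G act t"
    then show "\<Inter>(PV G act t) = t" using PV_inter[OF dr] by blast
  qed
  have cl: "\<forall>Z. pspec_closed G act Z \<longrightarrow> PV G act (\<Inter>Z) = Z
              \<and> radical_ideal (\<Inter>Z) \<and> difference_ideal G act (\<Inter>Z)"
  proof (intro allI impI)
    fix Z assume "pspec_closed G act Z"
    then show "PV G act (\<Inter>Z) = Z \<and> radical_ideal (\<Inter>Z) \<and> difference_ideal G act (\<Inter>Z)"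
      by (rule closed_PV[OF dr])
  qed
  have bij: "bij_betw (PV G act) {t. radical_ideal t \<and> difference_ideal G act t}
                              {Z. pspec_closed G act Z}"
    unfolding bij_betw_def
  proof
    show "inj_on (PV G act) {t. radical_ideal t \<and> difference_ideal G act t}"
    proof (rule inj_onI)
      fix t1 t2 assume a: "t1 \<in> {t. radical_ideal t \<and> difference_ideal G act t}"
        "t2 \<in> {t. radical_ideal t \<and> difference_ideal G act t}" and e: "PV G act t1 = PV G act t2"
      have "t1 = \<Inter>(PV G act t1)" using inv a(1) by simp
      also have "\<dots> = \<Inter>(PV G act t2)" using e by simp
      also have "\<dots> = t2" using inv a(2) by simp
      finally show "t1 = t2" .
    qed
  next
    show "PV G act ` {t. radical_ideal t \<and> difference_ideal G act t} = {Z. pspec_closed G act Z}"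
    proof
      show "PV G act ` {t. radical_ideal t \<and> difference_ideal G act t} \<subseteq> {Z. pspec_closed G act Z}"
        unfolding pspec_closed_def by blast
    next
      show "{Z. pspec_closed G act Z} \<subseteq> PV G act ` {t. radical_ideal t \<and> difference_ideal G act t}"
      proof
        fix Z assume "Z \<in> {Z. pspec_closed G act Z}"
        then have "PV G act (\<Inter>Z) = Z" "radical_ideal (\<Inter>Z) \<and> difference_ideal G act (\<Inter>Z)"
          using cl by blast+
        then show "Z \<in> PV G act ` {t. radical_ideal t \<and> difference_ideal G act t}"
          by (intro image_eqI[of Z _ "\<Inter>Z"]) simp_all
      qed
    qed
  qed
  have p1: "\<forall>s t. PD G act s \<inter> PD G act t
            = (\<Union>\<sigma>\<in>carrier G. \<Union>\<tau>\<in>carrier G. PD G act (act \<sigma> s * act \<tau> t))"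
    using part1[OF dr] by blast
  have p2: "\<forall>s. PD G act s = {} \<longleftrightarrow> (\<exists>n. s ^ n = 0)" using part2[OF dr] by blast
  show ?thesis using p1 p2 part3[OF dr] bij inv cl by (intro conjI)
qed


end
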